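(* Let $k\ge1$ and put $c_0=0$, $c_j=3^{j-1}\cdot100^{(k-1)^2}$ for $j=1,\dots,k+1$, and $c_{k+2}=100^{k^2}$; let $\xi_i=c_i-c_{i-1}-1$ for $i=1,\dots,k+2$. Let $$E=A(\xi_1)\,x_{c_0}\,A(\xi_2)\,x_{c_1}\,A(\xi_3)\,x_{c_2}\cdots x_{c_k}\,A(\xi_{k+2}),$$ and for a permutation $\sigma$ of $\{c_0,\dots,c_k\}$ let $E^\sigma=A(\xi_1)x_{\sigma(c_0)}A(\xi_2)x_{\sigma(c_1)}\cdots x_{\sigma(c_k)}A(\xi_{k+2})$. Let $a\in A(100^{k^2}-1)$ with $a\in B_1+\dots+B_k$, and suppose that for every permutation $\sigma$ other than the identity, no summand of $a$ lies in $E^\sigma$. Let $\bar b$ be the sum of all summands of $a$ that lie in $E$. Then $\bar b\in B_1+\dots+B_{k-1}$ (interpreted as $\{0\}$ when $k=1$).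
   Context: Let $K$ be a field and $A$ the free associative (non-unital) $K$-algebra on free generators $x_0,x_1,x_2,\dots$, with $K$-basis of monomials; $A^1$ is $A$ with unity adjoined. For $n\ge1$, $A(n)$ is the $K$-span of monomials of length $n$, and $A(0)=K$; a product of subspaces such as $E$ means the $K$-span of the corresponding products. A summand of $a\in A$ is a term $\kappa s$ ($\kappa\ne0$, $s$ a monomial) occurring in the expansion of $a$ in the monomial basis; it "lies in" a span of monomials if $s$ does. For a monomial $s=x_{i_1}\cdots x_{i_n}$ write $s[q]=x_{i_q}$. For $j\ge1$, $Z_j$ is the set of all elements $a\in A$ of one of the forms: (1) $a=\kappa s$, $\kappa\in K$, $s$ a monomial of length $100^{j^2}-1$ with $s[3^p\cdot100^{(j-1)^2}]=s[3^q\cdot100^{(j-1)^2}]$ for some $0\le p<q\le j$; (2) $a=\kappa(s_1+s_2)$, $\kappa\in K$, $s_1,s_2$ monomials of length $100^{j^2}-1$, with integers $0\le p<q\le j$ and $l_1>l_2\ge0$ such that $s_1$ has $x_{l_1}$ at position $3^p\cdot100^{(j-1)^2}$ and $x_{l_2}$ at position $3^q\cdot100^{(j-1)^2}$, $s_2$ has $x_{l_2}$ and $x_{l_1}$ at these positions respectively, and $s_1,s_2$ agree at all other positions. $B_j=\sum_{m\ge0}A(m\cdot100^{j^2})\,Z_j\,A^1$ (the $K$-span of products $uzv$ with $u\in A(m\cdot100^{j^2})$, $m\ge0$, $z\in Z_j$, $v\in A^1$). *)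

theory Defs
  imports "HOL-Combinatorics.Permutations"
begin

text \<open>Elements of the unital free algebra A^1 on generators x_0, x_1, ... over a field are
  represented as coefficient functions on monomials (words = nat lists; letter i stands for x_i).
  Only finitely supported functions arise (everything is generated as K-spans of monomials).\<close>

type_synonym 'a fa = "nat list \<Rightarrow> 'a"

definition mono :: "nat list \<Rightarrow> 'a::field fa" where
  "mono s = (\<lambda>w. if w = s then 1 else 0)"

definition fa_mult :: "'a::field fa \<Rightarrow> 'a fa \<Rightarrow> 'a fa" where
  "fa_mult f g = (\<lambda>w. \<Sum>i\<le>length w. f (take i w) * g (drop i w))"

inductive_set kspan :: "'a::field fa set \<Rightarrow> 'a fa set" for S where
  zero: "(\<lambda>_. 0) \<in> kspan S"
| gen: "f \<in> S \<Longrightarrow> f \<in> kspan S"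
| add: "f \<in> kspan S \<Longrightarrow> g \<in> kspan S \<Longrightarrow> (\<lambda>w. f w + g w) \<in> kspan S"
| smul: "f \<in> kspan S \<Longrightarrow> (\<lambda>w. c * f w) \<in> kspan S"

definition Adeg :: "nat \<Rightarrow> 'a::field fa set" where
  "Adeg n = kspan {mono s | s. length s = n}"

definition Aone :: "'a::field fa set" where
  "Aone = kspan (range mono)"

text \<open>s[q] (1-indexed position) is s ! (q - 1).\<close>
definition posZ :: "nat \<Rightarrow> nat \<Rightarrow> nat" where
  "posZ j p = 3 ^ p * 100 ^ ((j - 1)\<^sup>2)"

definition Z :: "nat \<Rightarrow> 'a::field fa set" where
  "Z j =
    {(\<lambda>w. \<kappa> * mono s w) | \<kappa> s. length s = 100 ^ (j\<^sup>2) - 1 \<and>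
        (\<exists>p q. p < q \<and> q \<le> j \<and> s ! (posZ j p - 1) = s ! (posZ j q - 1))}
  \<union> {(\<lambda>w. \<kappa> * (mono s1 w + mono s2 w)) | \<kappa> s1 s2.
        length s1 = 100 ^ (j\<^sup>2) - 1 \<and> length s2 = 100 ^ (j\<^sup>2) - 1 \<and>
        (\<exists>p q l1 l2. p < q \<and> q \<le> j \<and> l2 < l1 \<and>
           s1 ! (posZ j p - 1) = l1 \<and> s1 ! (posZ j q - 1) = l2 \<and>
           s2 ! (posZ j p - 1) = l2 \<and> s2 ! (posZ j q - 1) = l1 \<and>
           (\<forall>i < length s1. i \<noteq> posZ j p - 1 \<longrightarrow> i \<noteq> posZ j q - 1 \<longrightarrow> s1 ! i = s2 ! i))}"

definition B :: "nat \<Rightarrow> 'a::field fa set" where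
  "B j = kspan {fa_mult (fa_mult u z) v | u z v m.
                 u \<in> Adeg (m * 100 ^ (j\<^sup>2)) \<and> z \<in> Z j \<and> v \<in> Aone}"

definition Bsum :: "nat \<Rightarrow> 'a::field fa set" where
  "Bsum k = kspan (\<Union>j\<in>{1..k}. B j)"

definition cc :: "nat \<Rightarrow> nat \<Rightarrow> nat" where
  "cc k j = (if j = 0 then 0 else if j \<le> k + 1 then 3 ^ (j - 1) * 100 ^ ((k - 1)\<^sup>2)
             else 100 ^ (k\<^sup>2))"

text \<open>A monomial lies in E^\<sigma> = A(\<xi>_1) x_{\<sigma>(c_0)} A(\<xi>_2) ... x_{\<sigma>(c_k)} A(\<xi>_{k+2}) iff
  it has length c_(k+2) - 1 and letter x_{\<sigma>(c_(i-1))} at position c_i for i = 1..k+1.\<close>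
definition inEsig :: "nat \<Rightarrow> (nat \<Rightarrow> nat) \<Rightarrow> nat list \<Rightarrow> bool" where
  "inEsig k \<sigma> s \<longleftrightarrow> length s = cc k (k + 2) - 1 \<and>
     (\<forall>i\<in>{1..k+1}. s ! (cc k i - 1) = \<sigma> (cc k (i - 1)))"

end

theory Submission
  imports Defs
begin

definition CP :: "nat \<Rightarrow> nat set" where "CP k = (\<lambda>i. cc k i - 1) ` {1..k+1}"
definition Cset :: "nat \<Rightarrow> nat set" where "Cset k = cc k ` {0..k}"
definition tw :: "nat \<Rightarrow> (nat \<Rightarrow> nat) \<Rightarrow> nat list \<Rightarrow> nat list" where
  "tw k \<sigma> t = map (\<lambda>n. if n \<in> CP k then \<sigma> (t!n) else t!n) [0..<length t]"

lemma cc_pos: "1 \<le> i \<Longrightarrow> 0 < cc k i"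
  by (simp add: cc_def)

lemma cc_less: assumes "i < i'" "i' \<le> k+1" shows "cc k i < cc k i'"
proof (cases "i = 0")
  case True then show ?thesis using assms cc_pos[of i' k] by (simp add: cc_def)
next
  case False
  have "(3::nat)^(i-1) < 3^(i'-1)" using assms False by (intro power_strict_increasing) auto
  then show ?thesis using assms False by (simp add: cc_def)
qed

lemma cc_inj: "i \<le> k+1 \<Longrightarrow> i' \<le> k+1 \<Longrightarrow> cc k i = cc k i' \<Longrightarrow> i = i'"
  by (metis cc_less less_irrefl linorder_neqE_nat)

lemma cc_bound: assumes "k \<ge> 1" "1 \<le> i" "i \<le> k+1" shows "cc k i < 100^(k\<^sup>2)"
proof -
  obtain k' where k: "k = Suc k'" using assms by (cases k) auto
  have e: "k\<^sup>2 = (k-1)\<^sup>2 + (2*k-1)" using k by (simp add: power2_eq_square)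
  have "(3::nat)^(i-1) \<le> 3^(2*k-1)" using assms by (intro power_increasing) auto
  also have "... < 100^(2*k-1)" using assms by (intro power_strict_mono) auto
  finally have "(3::nat)^(i-1) * 100^((k-1)\<^sup>2) < 100^(2*k-1) * 100^((k-1)\<^sup>2)" by simp
  moreover have "cc k i = 3^(i-1) * 100^((k-1)\<^sup>2)" using assms by (simp add: cc_def)
  moreover have "(100::nat)^(k\<^sup>2) = 100^(2*k-1) * 100^((k-1)\<^sup>2)"
    by (simp only: e power_add mult.commute)
  ultimately show ?thesis by simp
qed

lemma cc_top: "cc k (k+2) = 100^(k\<^sup>2)" by (simp add: cc_def)
lemma cc_top'[simp]: "cc k (Suc (Suc k)) = 100^(k\<^sup>2)" by (simp add: cc_def)

lemma posZ_cc: "p \<le> k \<Longrightarrow> posZ k p = cc k (p+1)" by (simp add: cc_def posZ_def)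

lemma cc_dvd: assumes "1 \<le> j" "j < k" "1 \<le> i" "i \<le> k+1" shows "100^(j\<^sup>2) dvd cc k i"
proof -
  have "j\<^sup>2 \<le> (k-1)\<^sup>2" using assms by (intro power_mono) auto
  then have "(100::nat)^(j\<^sup>2) dvd 100^((k-1)\<^sup>2)" by (rule le_imp_power_dvd)
  then show ?thesis using assms by (auto simp: cc_def)
qed

lemma CP_avoid: assumes "1 \<le> j" "j < k" "n \<in> CP k" "m * 100^(j\<^sup>2) \<le> n" "n < m * 100^(j\<^sup>2) + (100^(j\<^sup>2) - 1)"
  shows False
proof -
  define N :: nat where "N = 100^(j\<^sup>2)"
  have N: "N > 0" by (simp add: N_def)
  obtain i where i: "i \<in> {1..k+1}" "n = cc k i - 1" using assms(3) by (auto simp: CP_def)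
  obtain r where r: "cc k i = N * r" using cc_dvd[OF assms(1,2), of i] i by (auto simp: N_def)
  have pos: "cc k i > 0" using cc_pos i by auto
  have "m * N < N * r" using assms(4) i r pos unfolding N_def by linarith
  then have "m < r" by (simp add: mult.commute)
  then have "m * N + N \<le> r * N" using mult_le_mono1[of "Suc m" r N] by simp
  then show False using assms(5) i r pos unfolding N_def[symmetric] by (simp add: mult.commute)
qed

lemma length_tw[simp]: "length (tw k \<sigma> t) = length t" by (simp add: tw_def)

lemma tw_nth: "n < length t \<Longrightarrow> tw k \<sigma> t ! n = (if n \<in> CP k then \<sigma> (t!n) else t!n)"
  by (simp add: tw_def)

lemma inE_len: "inEsig k \<sigma> t \<Longrightarrow> k \<ge> 1 \<Longrightarrow> i \<in> {1..k+1} \<Longrightarrow> cc k i - 1 < length t"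
  using cc_bound[of k i] cc_pos[of i k] by (auto simp: inEsig_def cc_top)

lemma CP_len: "inEsig k \<sigma> t \<Longrightarrow> k \<ge> 1 \<Longrightarrow> n \<in> CP k \<Longrightarrow> n < length t"
  using inE_len by (auto simp: CP_def)

lemma tw_CP: assumes "inEsig k id t" "k \<ge> 1" "i \<in> {1..k+1}"
  shows "tw k \<sigma> t ! (cc k i - 1) = \<sigma> (cc k (i - 1))"
  using assms inE_len[OF assms] by (auto simp: tw_nth CP_def inEsig_def)

lemma tw_inE: assumes "inEsig k id t" "k \<ge> 1" shows "inEsig k \<sigma> (tw k \<sigma> t)"
  using assms tw_CP[OF assms] by (auto simp: inEsig_def)

lemma tw_id: "tw k id t = t"
  by (rule nth_equalityI) (auto simp: tw_nth)

lemma tw_uniq: assumes "inEsig k id t" "inEsig k id t'" "k \<ge> 1" "\<sigma> permutes Cset k" "\<sigma>' permutes Cset k"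
  "tw k \<sigma> t = tw k \<sigma>' t'" shows "t = t' \<and> \<sigma> = \<sigma>'"
proof
  have L: "length t = length t'" using assms(6) by (metis length_tw)
  show tt: "t = t'"
  proof (rule nth_equalityI[OF L])
    fix n assume n: "n < length t"
    show "t ! n = t' ! n"
    proof (cases "n \<in> CP k")
      case True
      then obtain i where "i \<in> {1..k+1}" "n = cc k i - 1" by (auto simp: CP_def)
      then show ?thesis using assms(1,2) by (auto simp: inEsig_def)
    next
      case False
      then show ?thesis using n L arg_cong[OF assms(6), of "\<lambda>l. l!n"] by (simp add: tw_nth)
    qed
  qed
  show "\<sigma> = \<sigma>'"
  proof
    fix x show "\<sigma> x = \<sigma>' x"
    proof (cases "x \<in> Cset k")
      case True
      then obtain i where i: "i \<in> {0..k}" "x = cc k i" by (auto simp: Cset_def)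
      have "tw k \<sigma> t ! (cc k (i+1) - 1) = \<sigma> (cc k i)" using tw_CP[OF assms(1,3), of "i+1"] i by auto
      moreover have "tw k \<sigma>' t ! (cc k (i+1) - 1) = \<sigma>' (cc k i)" using tw_CP[OF assms(1,3), of "i+1"] i by auto
      ultimately show ?thesis using assms(6) tt i by simp
    next
      case False then show ?thesis using assms(4,5) by (simp add: permutes_not_in)
    qed
  qed
qed

definition psi :: "nat \<Rightarrow> 'a::field fa \<Rightarrow> 'a fa" where
  "psi k f = (\<lambda>t. if inEsig k id t then
      (\<Sum>\<sigma>\<in>{\<sigma>. \<sigma> permutes Cset k}. of_int (sign \<sigma>) * f (tw k \<sigma> t)) else 0)"

lemma finite_perms[simp]: "finite {\<sigma>. \<sigma> permutes Cset k}"
  by (simp add: finite_permutations Cset_def)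

lemma psi_zero: "psi k (\<lambda>_. 0) = (\<lambda>_. 0)"
  by (simp add: psi_def fun_eq_iff)

lemma psi_add: "psi k (\<lambda>w. f w + g w) = (\<lambda>w. psi k f w + psi k g w)"
  by (auto simp: psi_def sum.distrib algebra_simps)

lemma psi_smul: "psi k (\<lambda>w. c * f w) = (\<lambda>w. c * psi k f w)"
  by (auto simp: psi_def sum_distrib_left algebra_simps)

lemma fa_mult_zero1: "fa_mult (\<lambda>_. 0) g = (\<lambda>_. 0)" by (simp add: fa_mult_def)
lemma fa_mult_zero2: "fa_mult f (\<lambda>_. 0) = (\<lambda>_. 0)" by (simp add: fa_mult_def)
lemma fa_mult_add1: "fa_mult (\<lambda>w. f w + g w) h = (\<lambda>w. fa_mult f h w + fa_mult g h w)"
  by (simp add: fa_mult_def sum.distrib algebra_simps)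
lemma fa_mult_add2: "fa_mult h (\<lambda>w. f w + g w) = (\<lambda>w. fa_mult h f w + fa_mult h g w)"
  by (simp add: fa_mult_def sum.distrib algebra_simps)
lemma fa_mult_smul1: "fa_mult (\<lambda>w. c * f w) h = (\<lambda>w. c * fa_mult f h w)"
  by (simp add: fa_mult_def sum_distrib_left algebra_simps)
lemma fa_mult_smul2: "fa_mult h (\<lambda>w. c * f w) = (\<lambda>w. c * fa_mult h f w)"
  by (simp add: fa_mult_def sum_distrib_left algebra_simps)

lemma fa_mult_mono: "fa_mult (mono x) (mono y) = (mono (x @ y) :: 'a::field fa)"
proof
  fix w :: "nat list"
  have "fa_mult (mono x) (mono y) w = (\<Sum>i\<le>length w. (if i = length x then (if w = x @ y then 1 else 0) else (0::'a)))"
    unfolding fa_mult_def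
  proof (rule sum.cong[OF refl])
    fix i assume i: "i \<in> {..length w}"
    show "mono x (take i w) * mono y (drop i w) = (if i = length x then (if w = x @ y then 1 else 0) else (0::'a))"
    proof -
      have eq: "(take i w = x \<and> drop i w = y) \<longleftrightarrow> (i = length x \<and> w = x @ y)"
      proof
        assume h: "take i w = x \<and> drop i w = y"
        have "i = length x" using h i by auto
        moreover have "w = x @ y" using h append_take_drop_id[of i w] by simp
        ultimately show "i = length x \<and> w = x @ y" by simp
      next
        assume "i = length x \<and> w = x @ y"
        then show "take i w = x \<and> drop i w = y" by simp
      qed
      have "mono x (take i w) * mono y (drop i w) = (if take i w = x \<and> drop i w = y then 1 else (0::'a))"
        by (simp add: mono_def)
      also have "\<dots> = (if i = length x \<and> w = x @ y then 1 else 0)" using eq by simp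
      also have "\<dots> = (if i = length x then (if w = x @ y then 1 else 0) else (0::'a))" by simp
      finally show ?thesis .
    qed
  qed
  also have "\<dots> = mono (x @ y) w" by (auto simp: mono_def)
  finally show "fa_mult (mono x) (mono y) w = (mono (x @ y) w :: 'a)" .
qed

lemma sum_single:
  assumes "finite S" "x \<in> S" "\<And>y. y \<in> S \<Longrightarrow> y \<noteq> x \<Longrightarrow> f y = 0"
  shows "sum f S = f x"
proof -
  have "sum f S = (\<Sum>y\<in>S. if y = x then f x else 0)" using assms by (intro sum.cong) auto
  also have "\<dots> = f x" using assms by simp
  finally show ?thesis .
qed

lemma psi_mono_some:
  assumes "k \<ge> 1" "inEsig k id t0" "\<sigma>0 permutes Cset k" "tw k \<sigma>0 t0 = w"
  shows "psi k (\<lambda>x. \<kappa> * mono w x) = (\<lambda>x. (\<kappa> * of_int (sign \<sigma>0)) * mono t0 x)"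
proof
  fix t
  show "psi k (\<lambda>x. \<kappa> * mono w x) t = (\<kappa> * of_int (sign \<sigma>0)) * mono t0 t"
  proof (cases "inEsig k id t")
    case False
    then have "t \<noteq> t0" using assms by auto
    then show ?thesis using False by (simp add: psi_def mono_def)
  next
    case True
    show ?thesis
    proof (cases "t = t0")
      case tt: True
      have ot: "mono w (tw k y t0) = (0::'a)" if y1: "y permutes Cset k" and y2: "y \<noteq> \<sigma>0" for y
      proof -
        have "tw k y t0 \<noteq> tw k \<sigma>0 t0"
        proof
          assume e: "tw k y t0 = tw k \<sigma>0 t0"
          have "y = \<sigma>0" using tw_uniq[OF assms(2) assms(2) assms(1) y1 assms(3) e] by (rule conjunct2)
          then show False using y2 by simp
        qed
        then show ?thesis using assms(4) by (simp add: mono_def)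
      qed
      have "psi k (\<lambda>x. \<kappa> * mono w x) t = (\<Sum>\<sigma>\<in>{\<sigma>. \<sigma> permutes Cset k}. of_int (sign \<sigma>) * (\<kappa> * mono w (tw k \<sigma> t0)))"
        unfolding psi_def using True tt by simp
      also have "\<dots> = of_int (sign \<sigma>0) * (\<kappa> * mono w (tw k \<sigma>0 t0))"
        by (rule sum_single) (use assms ot in auto)
      finally have "psi k (\<lambda>x. \<kappa> * mono w x) t = of_int (sign \<sigma>0) * (\<kappa> * mono w (tw k \<sigma>0 t))"
        using tt by simp
      then show ?thesis using tt assms by (simp add: mono_def)
    next
      case ff: False
      have nw: "\<forall>\<sigma>. \<sigma> permutes Cset k \<longrightarrow> tw k \<sigma> t \<noteq> w"
      proof (intro allI impI notI)
        fix \<sigma> assume s1: "\<sigma> permutes Cset k" and s2: "tw k \<sigma> t = w"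
        have s3: "tw k \<sigma> t = tw k \<sigma>0 t0" using s2 assms(4) by simp
        have "t = t0" using tw_uniq[OF True assms(2) assms(1) s1 assms(3) s3] by (rule conjunct1)
        then show False using ff by simp
      qed
      have "psi k (\<lambda>x. \<kappa> * mono w x) t = 0"
        unfolding psi_def using nw by (simp add: mono_def)
      then show ?thesis using ff by (simp add: mono_def)
    qed
  qed
qed

lemma psi_mono_none:
  assumes "\<not> (\<exists>\<sigma> t. inEsig k id t \<and> \<sigma> permutes Cset k \<and> tw k \<sigma> t = w)"
  shows "psi k (\<lambda>x. \<kappa> * mono w x) = (\<lambda>_. 0)"
  using assms by (auto simp: psi_def mono_def intro!: sum.neutral)

lemma out_mid: "length x = a \<Longrightarrow> length y = L \<Longrightarrow> length y' = L \<Longrightarrow> n < a \<or> a + L \<le> n \<Longrightarrow>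
   (x @ y @ z) ! n = (x @ y' @ z) ! n"
  by (auto simp: nth_append)

lemma repl_nth: "a + L \<le> length t \<Longrightarrow> length y = L \<Longrightarrow> n < length t \<Longrightarrow>
  (take a t @ y @ drop (a + L) t) ! n = (if n < a then t ! n else if n < a + L then y ! (n - a) else t ! n)"
  by (auto simp: nth_append)

lemma repl_len: "a + L \<le> length t \<Longrightarrow> length y = L \<Longrightarrow> length (take a t @ y @ drop (a + L) t) = length t"
  by simp

lemma mid_replace:
  assumes k: "k \<ge> 1" and t: "inEsig k id t" and tw: "tw k \<sigma> t = u0 @ s @ v0"
    and ls: "length s' = length s"
    and av: "\<forall>n\<in>CP k. \<not> (length u0 \<le> n \<and> n < length u0 + length s)"
  shows "inEsig k id (take (length u0) t @ s' @ drop (length u0 + length s) t) \<and>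
         tw k \<sigma> (take (length u0) t @ s' @ drop (length u0 + length s) t) = u0 @ s' @ v0"
proof -
  define t' where "t' = take (length u0) t @ s' @ drop (length u0 + length s) t"
  have Lt: "length t = length u0 + length s + length v0" using arg_cong[OF tw, of length] by simp
  have Lt': "length t' = length t" unfolding t'_def using Lt ls by simp
  have nth': "t' ! n = (if n < length u0 then t ! n else if n < length u0 + length s then s' ! (n - length u0) else t ! n)"
    if "n < length t" for n
    unfolding t'_def using repl_nth[of "length u0" "length s" t s' n] Lt ls that by simp
  have outW: "(u0 @ s @ v0) ! n = (u0 @ s' @ v0) ! n" if "n < length u0 \<or> length u0 + length s \<le> n" for n
    using out_mid[of u0 "length u0" s "length s" s' n v0] ls that by simp
  have inE: "inEsig k id t'"
    unfolding inEsig_def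
  proof
    show "length t' = cc k (k + 2) - 1" using Lt' t by (simp add: inEsig_def)
    show "\<forall>i\<in>{1..k + 1}. t' ! (cc k i - 1) = id (cc k (i - 1))"
    proof
      fix i assume i: "i \<in> {1..k+1}"
      have c: "cc k i - 1 \<in> CP k" using i by (auto simp: CP_def)
      have l: "cc k i - 1 < length t" using inE_len[OF t k i] .
      have "t' ! (cc k i - 1) = t ! (cc k i - 1)" using nth'[OF l] av c by auto
      then show "t' ! (cc k i - 1) = id (cc k (i - 1))" using t i by (simp add: inEsig_def)
    qed
  qed
  have "tw k \<sigma> t' = u0 @ s' @ v0"
  proof (rule nth_equalityI)
    show "length (tw k \<sigma> t') = length (u0 @ s' @ v0)" using Lt' Lt ls by simp
    fix n assume n: "n < length (tw k \<sigma> t')"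
    then have n': "n < length t" using Lt' by simp
    have twn: "tw k \<sigma> t ! n = (u0 @ s @ v0) ! n" using tw by simp
    show "tw k \<sigma> t' ! n = (u0 @ s' @ v0) ! n"
    proof (cases "n \<in> CP k")
      case True
      then have o: "n < length u0 \<or> length u0 + length s \<le> n" using av by auto
      have "tw k \<sigma> t' ! n = \<sigma> (t' ! n)" using True n' Lt' by (simp add: tw_nth)
      also have "\<dots> = \<sigma> (t ! n)" using nth'[OF n'] o by auto
      also have "\<dots> = tw k \<sigma> t ! n" using True n' by (simp add: tw_nth)
      finally show ?thesis using twn outW[OF o] by simp
    next
      case False
      have "tw k \<sigma> t' ! n = t' ! n" using False n' Lt' by (simp add: tw_nth)
      moreover have "tw k \<sigma> t ! n = t ! n" using False n' by (simp add: tw_nth)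
      ultimately show ?thesis using nth'[OF n'] twn outW[of n] ls Lt n'
        by (auto simp: nth_append split: if_splits)
    qed
  qed
  then show ?thesis using inE unfolding t'_def by simp
qed

lemma swap_tw:
  assumes k: "k \<ge> 1" and t: "inEsig k id t" and pq: "p < q" "q \<le> k" and sg: "\<sigma> permutes Cset k"
    and tw: "tw k \<sigma> t = s" and ls: "length s' = length s"
    and e1: "s' ! (cc k (p+1) - 1) = s ! (cc k (q+1) - 1)"
    and e2: "s' ! (cc k (q+1) - 1) = s ! (cc k (p+1) - 1)"
    and oth: "\<forall>i<length s. i \<noteq> cc k (p+1) - 1 \<longrightarrow> i \<noteq> cc k (q+1) - 1 \<longrightarrow> s ! i = s' ! i"
  shows "tw k (\<sigma> \<circ> transpose (cc k p) (cc k q)) t = s'"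
proof (rule nth_equalityI)
  have Ls: "length s = length t" using tw by auto
  show "length (tw k (\<sigma> \<circ> transpose (cc k p) (cc k q)) t) = length s'" using Ls ls by simp
  fix n assume "n < length (tw k (\<sigma> \<circ> transpose (cc k p) (cc k q)) t)"
  then have n: "n < length t" by simp
  let ?\<tau> = "transpose (cc k p) (cc k q)"
  show "tw k (\<sigma> \<circ> ?\<tau>) t ! n = s' ! n"
  proof (cases "n \<in> CP k")
    case True
    then obtain i where i: "i \<in> {1..k+1}" "n = cc k i - 1" by (auto simp: CP_def)
    have A: "tw k (\<sigma> \<circ> ?\<tau>) t ! n = \<sigma> (?\<tau> (cc k (i - 1)))" using tw_CP[OF t k i(1)] i by simp
    have B: "\<And>i'. i' \<in> {1..k+1} \<Longrightarrow> \<sigma> (cc k (i' - 1)) = s ! (cc k i' - 1)"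
      using tw_CP[OF t k] tw by auto
    have ci: "cc k i' - 1 = cc k i - 1 \<longleftrightarrow> i' = i" if "i' \<in> {1..k+1}" for i'
    proof
      assume h: "cc k i' - 1 = cc k i - 1"
      have "cc k i' = cc k i" using h cc_pos[of i k] cc_pos[of i' k] that i by simp
      then show "i' = i" using cc_inj[of i' k i] that i by simp
    qed simp
    consider "i = p + 1" | "i = q + 1" | "i \<noteq> p + 1" "i \<noteq> q + 1" by blast
    then show ?thesis
    proof cases
      case 1
      then have "?\<tau> (cc k (i - 1)) = cc k q" by simp
      then show ?thesis using A B[of "q+1"] pq e1 i 1 by simp
    next
      case 2
      then have "?\<tau> (cc k (i - 1)) = cc k p" by simp
      then show ?thesis using A B[of "p+1"] pq e2 i 2 by simp
    next
      case 3
      have "cc k (i - 1) \<noteq> cc k p" using cc_inj[of "i - 1" k p] 3 i pq by auto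
      moreover have "cc k (i - 1) \<noteq> cc k q" using cc_inj[of "i - 1" k q] 3 i pq by auto
      ultimately have "?\<tau> (cc k (i - 1)) = cc k (i - 1)" by (simp add: transpose_def)
      then have "tw k (\<sigma> \<circ> ?\<tau>) t ! n = s ! n" using A B[OF i(1)] i by simp
      moreover have "n \<noteq> cc k (p+1) - 1" "n \<noteq> cc k (q+1) - 1" using ci[of "p+1"] ci[of "q+1"] 3 i pq by auto
      ultimately show ?thesis using oth n Ls by simp
    qed
  next
    case False
    have "tw k (\<sigma> \<circ> ?\<tau>) t ! n = t ! n" using False n by (simp add: tw_nth)
    also have "\<dots> = s ! n" using False n tw tw_nth[OF n, of k \<sigma>] by simp
    finally show ?thesis using oth n Ls False pq by (auto simp: CP_def)
  qed
qed

lemma gen1: "fa_mult (fa_mult (mono u0) (\<lambda>w. \<kappa> * mono s w)) (mono v0) = (\<lambda>w. (\<kappa>::'a::field) * mono (u0 @ s @ v0) w)"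
  by (simp add: fa_mult_smul2 fa_mult_smul1 fa_mult_mono)

lemma gen2: "fa_mult (fa_mult (mono u0) (\<lambda>w. \<kappa> * (mono s1 w + mono s2 w))) (mono v0) =
   (\<lambda>w. (\<kappa>::'a::field) * mono (u0 @ s1 @ v0) w + \<kappa> * mono (u0 @ s2 @ v0) w)"
  by (simp add: fa_mult_smul2 fa_mult_smul1 fa_mult_add1 fa_mult_add2 fa_mult_mono algebra_simps)

lemma B_zero: "(\<lambda>_. 0) \<in> B j" by (simp add: B_def kspan.zero)
lemma Bsum_zero: "(\<lambda>_. 0) \<in> Bsum j" by (simp add: Bsum_def kspan.zero)

lemma genB:
  assumes "length u1 = m * 100^(j\<^sup>2)" "z \<in> Z j"
  shows "fa_mult (fa_mult (mono u1) z) (mono v1) \<in> (B j :: 'a::field fa set)"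
proof -
  have u: "(mono u1 :: 'a fa) \<in> Adeg (m * 100^(j\<^sup>2))" unfolding Adeg_def
    by (rule kspan.gen) (use assms in auto)
  have v: "(mono v1 :: 'a fa) \<in> Aone" unfolding Aone_def by (rule kspan.gen) auto
  show ?thesis unfolding B_def by (rule kspan.gen) (use u v assms in blast)
qed

lemma Z_cases:
  assumes "z \<in> Z j"
  obtains (t1) \<kappa> s where "z = (\<lambda>w. \<kappa> * mono s w)" "length s = 100 ^ (j\<^sup>2) - 1"
     "\<exists>p q. p < q \<and> q \<le> j \<and> s ! (posZ j p - 1) = s ! (posZ j q - 1)"
  | (t2) \<kappa> s1 s2 where "z = (\<lambda>w. \<kappa> * (mono s1 w + mono s2 w))"
        "length s1 = 100 ^ (j\<^sup>2) - 1" "length s2 = 100 ^ (j\<^sup>2) - 1"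
        "\<exists>p q l1 l2. p < q \<and> q \<le> j \<and> l2 < l1 \<and>
           s1 ! (posZ j p - 1) = l1 \<and> s1 ! (posZ j q - 1) = l2 \<and>
           s2 ! (posZ j p - 1) = l2 \<and> s2 ! (posZ j q - 1) = l1 \<and>
           (\<forall>i < length s1. i \<noteq> posZ j p - 1 \<longrightarrow> i \<noteq> posZ j q - 1 \<longrightarrow> s1 ! i = s2 ! i)"
  using assms unfolding Z_def by blast

lemma Z_t1: "length s = 100 ^ (j\<^sup>2) - 1 \<Longrightarrow> \<exists>p q. p < q \<and> q \<le> j \<and> s ! (posZ j p - 1) = s ! (posZ j q - 1)
  \<Longrightarrow> (\<lambda>w. \<kappa> * mono s w) \<in> Z j"
  unfolding Z_def by blast

lemma Z_t2: "length s1 = 100 ^ (j\<^sup>2) - 1 \<Longrightarrow> length s2 = 100 ^ (j\<^sup>2) - 1 \<Longrightarrow>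
        \<exists>p q l1 l2. p < q \<and> q \<le> j \<and> l2 < l1 \<and>
           s1 ! (posZ j p - 1) = l1 \<and> s1 ! (posZ j q - 1) = l2 \<and>
           s2 ! (posZ j p - 1) = l2 \<and> s2 ! (posZ j q - 1) = l1 \<and>
           (\<forall>i < length s1. i \<noteq> posZ j p - 1 \<longrightarrow> i \<noteq> posZ j q - 1 \<longrightarrow> s1 ! i = s2 ! i)
  \<Longrightarrow> (\<lambda>w. \<kappa> * (mono s1 w + mono s2 w)) \<in> Z j"
  unfolding Z_def by blast

lemma tw_len_W: "inEsig k id t \<Longrightarrow> tw k \<sigma> t = W \<Longrightarrow> length W = 100^(k\<^sup>2) - 1"
  by (auto simp: inEsig_def)

lemma core_lt:
  assumes k: "k \<ge> 1" and j: "1 \<le> j" "j < k" and u0: "length u0 = m * 100^(j\<^sup>2)" and z: "z \<in> Z j"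
  shows "psi k (fa_mult (fa_mult (mono u0) z) (mono v0)) \<in> (B j :: 'a::field fa set)"
proof -
  have av: "\<forall>n\<in>CP k. \<not> (length u0 \<le> n \<and> n < length u0 + length s)" if "length s = 100^(j\<^sup>2) - 1" for s
    using CP_avoid[OF j] u0 that by metis
  from z show ?thesis
  proof (cases rule: Z_cases)
    case (t1 \<kappa> s)
    have g: "fa_mult (fa_mult (mono u0) z) (mono v0) = (\<lambda>w. \<kappa> * mono (u0 @ s @ v0) w)"
      using t1 gen1 by simp
    show ?thesis
    proof (cases "\<exists>\<sigma> t. inEsig k id t \<and> \<sigma> permutes Cset k \<and> tw k \<sigma> t = u0 @ s @ v0")
      case True
      then obtain \<sigma> t where st: "inEsig k id t" "\<sigma> permutes Cset k" "tw k \<sigma> t = u0 @ s @ v0" by blast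
      define tu where "tu = take (length u0) t"
      define tv where "tv = drop (length u0 + length s) t"
      have mr: "inEsig k id (tu @ s @ tv) \<and> tw k \<sigma> (tu @ s @ tv) = u0 @ s @ v0"
        unfolding tu_def tv_def by (rule mid_replace[OF k st(1) st(3) refl av[OF t1(2)]])
      have teq: "tu @ s @ tv = t"
        using tw_uniq[OF conjunct1[OF mr] st(1) k st(2) st(2)] mr st(3) by simp
      have ltu: "length tu = m * 100^(j\<^sup>2)" unfolding tu_def using u0 arg_cong[OF st(3), of length] by simp
      have "psi k (fa_mult (fa_mult (mono u0) z) (mono v0)) = (\<lambda>x. (\<kappa> * of_int (sign \<sigma>)) * mono (tu @ s @ tv) x)"
        unfolding g teq by (rule psi_mono_some[OF k st(1) st(2) st(3)])
      also have "\<dots> = fa_mult (fa_mult (mono tu) (\<lambda>w. (\<kappa> * of_int (sign \<sigma>)) * mono s w)) (mono tv)"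
        by (rule gen1[symmetric])
      finally show ?thesis using genB[OF ltu Z_t1[OF t1(2) t1(3)]] by simp
    next
      case False
      then show ?thesis unfolding g using psi_mono_none[OF False, of \<kappa>] B_zero by simp
    qed
  next
    case (t2 \<kappa> s1 s2)
    have g: "fa_mult (fa_mult (mono u0) z) (mono v0) = (\<lambda>w. \<kappa> * mono (u0 @ s1 @ v0) w + \<kappa> * mono (u0 @ s2 @ v0) w)"
      using t2 gen2 by simp
    have ps: "psi k (fa_mult (fa_mult (mono u0) z) (mono v0)) =
       (\<lambda>w. psi k (\<lambda>w. \<kappa> * mono (u0 @ s1 @ v0) w) w + psi k (\<lambda>w. \<kappa> * mono (u0 @ s2 @ v0) w) w)"
      unfolding g by (rule psi_add)
    have l12: "length s2 = length s1" using t2 by simp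
    show ?thesis
    proof (cases "\<exists>\<sigma> t. inEsig k id t \<and> \<sigma> permutes Cset k \<and> tw k \<sigma> t = u0 @ s1 @ v0")
      case True
      then obtain \<sigma> t where st: "inEsig k id t" "\<sigma> permutes Cset k" "tw k \<sigma> t = u0 @ s1 @ v0" by blast
      define tu where "tu = take (length u0) t"
      define tv where "tv = drop (length u0 + length s1) t"
      have mr: "inEsig k id (tu @ s1 @ tv) \<and> tw k \<sigma> (tu @ s1 @ tv) = u0 @ s1 @ v0"
        unfolding tu_def tv_def by (rule mid_replace[OF k st(1) st(3) refl av[OF t2(2)]])
      have mr2: "inEsig k id (tu @ s2 @ tv) \<and> tw k \<sigma> (tu @ s2 @ tv) = u0 @ s2 @ v0"
        unfolding tu_def tv_def by (rule mid_replace[OF k st(1) st(3) l12 av[OF t2(2)]])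
      have teq: "tu @ s1 @ tv = t"
        using tw_uniq[OF conjunct1[OF mr] st(1) k st(2) st(2)] mr st(3) by simp
      have ltu: "length tu = m * 100^(j\<^sup>2)" unfolding tu_def using u0 arg_cong[OF st(3), of length] by simp
      have p1: "psi k (\<lambda>w. \<kappa> * mono (u0 @ s1 @ v0) w) = (\<lambda>x. (\<kappa> * of_int (sign \<sigma>)) * mono (tu @ s1 @ tv) x)"
        unfolding teq by (rule psi_mono_some[OF k st(1) st(2) st(3)])
      have p2: "psi k (\<lambda>w. \<kappa> * mono (u0 @ s2 @ v0) w) = (\<lambda>x. (\<kappa> * of_int (sign \<sigma>)) * mono (tu @ s2 @ tv) x)"
        by (rule psi_mono_some[OF k conjunct1[OF mr2] st(2) conjunct2[OF mr2]])
      have "psi k (fa_mult (fa_mult (mono u0) z) (mono v0)) =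
         (\<lambda>x. (\<kappa> * of_int (sign \<sigma>)) * mono (tu @ s1 @ tv) x + (\<kappa> * of_int (sign \<sigma>)) * mono (tu @ s2 @ tv) x)"
        unfolding ps p1 p2 by simp
      also have "\<dots> = fa_mult (fa_mult (mono tu) (\<lambda>w. (\<kappa> * of_int (sign \<sigma>)) * (mono s1 w + mono s2 w))) (mono tv)"
        by (rule gen2[symmetric])
      finally show ?thesis using genB[OF ltu Z_t2[OF t2(2) t2(3) t2(4)]] by simp
    next
      case False
      have False2: "\<not> (\<exists>\<sigma> t. inEsig k id t \<and> \<sigma> permutes Cset k \<and> tw k \<sigma> t = u0 @ s2 @ v0)"
      proof
        assume "\<exists>\<sigma> t. inEsig k id t \<and> \<sigma> permutes Cset k \<and> tw k \<sigma> t = u0 @ s2 @ v0"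
        then obtain \<sigma> t where st: "inEsig k id t" "\<sigma> permutes Cset k" "tw k \<sigma> t = u0 @ s2 @ v0" by blast
        have "inEsig k id (take (length u0) t @ s1 @ drop (length u0 + length s2) t) \<and>
              tw k \<sigma> (take (length u0) t @ s1 @ drop (length u0 + length s2) t) = u0 @ s1 @ v0"
          by (rule mid_replace[OF k st(1) st(3) l12[symmetric] av[OF t2(3)]])
        then show False using False st(2) by blast
      qed
      show ?thesis unfolding ps using psi_mono_none[OF False, of \<kappa>] psi_mono_none[OF False2, of \<kappa>] B_zero by simp
    qed
  qed
qed

lemma len_force:
  assumes k: "k \<ge> 1" and t: "inEsig k id t" and tw: "tw k \<sigma> t = u0 @ s @ v0"
    and u0: "length u0 = m * 100^(k\<^sup>2)" and s: "length s = 100^(k\<^sup>2) - 1"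
  shows "u0 = [] \<and> v0 = []"
proof -
  have "length (u0 @ s @ v0) = 100^(k\<^sup>2) - 1" using tw_len_W[OF t tw] .
  then have h: "length u0 + length s + length v0 = 100^(k\<^sup>2) - 1" by simp
  have X: "(100::nat)^(k\<^sup>2) > 0" by simp
  have "m * 100^(k\<^sup>2) + length v0 = 0" using h u0 s X by linarith
  then show ?thesis using u0 X by simp
qed

lemma sign_swap_comp:
  assumes k: "k \<ge> 1" and pq: "p < q" "q \<le> k" and sg: "\<sigma> permutes Cset k"
  shows "(\<sigma> \<circ> transpose (cc k p) (cc k q)) permutes Cset k \<and>
         sign (\<sigma> \<circ> transpose (cc k p) (cc k q)) = - sign \<sigma>"
proof -
  have fin: "finite (Cset k)" by (simp add: Cset_def)
  have tp: "transpose (cc k p) (cc k q) permutes Cset k"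
    using pq by (intro permutes_swap_id) (auto simp: Cset_def)
  have ne: "cc k p \<noteq> cc k q" using cc_less[of p q k] pq by simp
  have "sign (\<sigma> \<circ> transpose (cc k p) (cc k q)) = sign \<sigma> * sign (transpose (cc k p) (cc k q))"
    by (rule sign_compose) (use permutes_imp_permutation[OF fin] sg tp in auto)
  also have "\<dots> = - sign \<sigma>" using ne by (simp add: sign_swap_id)
  finally show ?thesis using permutes_compose[OF tp sg] by simp
qed

lemma core_eq:
  assumes k: "k \<ge> 1" and u0: "length u0 = m * 100^(k\<^sup>2)" and z: "z \<in> Z k"
  shows "psi k (fa_mult (fa_mult (mono u0) z) (mono v0)) = (\<lambda>_. (0::'a::field))"
  using z
proof (cases rule: Z_cases)
  case (t1 \<kappa> s)
  have g: "fa_mult (fa_mult (mono u0) z) (mono v0) = (\<lambda>w. \<kappa> * mono (u0 @ s @ v0) w)"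
    using t1 gen1 by simp
  have none: "\<not> (\<exists>\<sigma> t. inEsig k id t \<and> \<sigma> permutes Cset k \<and> tw k \<sigma> t = u0 @ s @ v0)"
  proof
    assume "\<exists>\<sigma> t. inEsig k id t \<and> \<sigma> permutes Cset k \<and> tw k \<sigma> t = u0 @ s @ v0"
    then obtain \<sigma> t where st: "inEsig k id t" "\<sigma> permutes Cset k" "tw k \<sigma> t = u0 @ s @ v0" by blast
    have e: "u0 = [] \<and> v0 = []" by (rule len_force[OF k st(1) st(3) u0 t1(2)])
    then have st3: "tw k \<sigma> t = s" using st(3) by simp
    obtain p q where pq: "p < q" "q \<le> k" "s ! (posZ k p - 1) = s ! (posZ k q - 1)" using t1(3) by blast
    have "s ! (posZ k p - 1) = \<sigma> (cc k p)"
      using tw_CP[OF st(1) k, of "p+1" \<sigma>] st3 pq posZ_cc[of p k] by simp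
    moreover have "s ! (posZ k q - 1) = \<sigma> (cc k q)"
      using tw_CP[OF st(1) k, of "q+1" \<sigma>] st3 pq posZ_cc[of q k] by simp
    ultimately have "\<sigma> (cc k p) = \<sigma> (cc k q)" using pq by simp
    then have "cc k p = cc k q" using permutes_inj[OF st(2)] by (simp add: inj_eq)
    then show False using cc_less[of p q k] pq by simp
  qed
  show ?thesis unfolding g using psi_mono_none[OF none, of \<kappa>] by simp
next
  case (t2 \<kappa> s1 s2)
  have g: "fa_mult (fa_mult (mono u0) z) (mono v0) = (\<lambda>w. \<kappa> * mono (u0 @ s1 @ v0) w + \<kappa> * mono (u0 @ s2 @ v0) w)"
    using t2 gen2 by simp
  have ps: "psi k (fa_mult (fa_mult (mono u0) z) (mono v0)) =
     (\<lambda>w. psi k (\<lambda>w. \<kappa> * mono (u0 @ s1 @ v0) w) w + psi k (\<lambda>w. \<kappa> * mono (u0 @ s2 @ v0) w) w)"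
    unfolding g by (rule psi_add)
  obtain p q l1 l2 where pq: "p < q" "q \<le> k" and
     c: "s1 ! (posZ k p - 1) = l1" "s1 ! (posZ k q - 1) = l2"
           "s2 ! (posZ k p - 1) = l2" "s2 ! (posZ k q - 1) = l1"
     and oth: "\<forall>i < length s1. i \<noteq> posZ k p - 1 \<longrightarrow> i \<noteq> posZ k q - 1 \<longrightarrow> s1 ! i = s2 ! i"
    using t2(4) by blast
  have P: "posZ k p = cc k (p+1)" "posZ k q = cc k (q+1)" using pq posZ_cc by auto
  have l12: "length s1 = length s2" using t2 by simp
  have sw12: "tw k (\<sigma> \<circ> transpose (cc k p) (cc k q)) t = s2" if "inEsig k id t" "\<sigma> permutes Cset k" "tw k \<sigma> t = s1" for \<sigma> t
    by (rule swap_tw[OF k that(1) pq that(2) that(3) l12[symmetric]]) (use c P oth in auto)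
  have sw21: "tw k (\<sigma> \<circ> transpose (cc k p) (cc k q)) t = s1" if "inEsig k id t" "\<sigma> permutes Cset k" "tw k \<sigma> t = s2" for \<sigma> t
    by (rule swap_tw[OF k that(1) pq that(2) that(3) l12]) (use c P oth l12 in auto)
  show ?thesis
  proof (cases "\<exists>\<sigma> t. inEsig k id t \<and> \<sigma> permutes Cset k \<and> tw k \<sigma> t = u0 @ s1 @ v0")
    case True
    then obtain \<sigma> t where st: "inEsig k id t" "\<sigma> permutes Cset k" "tw k \<sigma> t = u0 @ s1 @ v0" by blast
    have e: "u0 = [] \<and> v0 = []" by (rule len_force[OF k st(1) st(3) u0 t2(2)])
    then have st3: "tw k \<sigma> t = s1" using st(3) by simp
    have ss: "(\<sigma> \<circ> transpose (cc k p) (cc k q)) permutes Cset k \<and>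
         sign (\<sigma> \<circ> transpose (cc k p) (cc k q)) = - sign \<sigma>" by (rule sign_swap_comp[OF k pq st(2)])
    have w2: "tw k (\<sigma> \<circ> transpose (cc k p) (cc k q)) t = u0 @ s2 @ v0" using sw12[OF st(1) st(2) st3] e by simp
    have p1: "psi k (\<lambda>w. \<kappa> * mono (u0 @ s1 @ v0) w) = (\<lambda>x. (\<kappa> * of_int (sign \<sigma>)) * mono t x)"
      by (rule psi_mono_some[OF k st(1) st(2) st(3)])
    have p2: "psi k (\<lambda>w. \<kappa> * mono (u0 @ s2 @ v0) w) = (\<lambda>x. (\<kappa> * of_int (sign (\<sigma> \<circ> transpose (cc k p) (cc k q)))) * mono t x)"
      by (rule psi_mono_some[OF k st(1) conjunct1[OF ss] w2])
    show ?thesis unfolding ps p1 p2 using conjunct2[OF ss] by (simp add: algebra_simps)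
  next
    case False
    have False2: "\<not> (\<exists>\<sigma> t. inEsig k id t \<and> \<sigma> permutes Cset k \<and> tw k \<sigma> t = u0 @ s2 @ v0)"
    proof
      assume "\<exists>\<sigma> t. inEsig k id t \<and> \<sigma> permutes Cset k \<and> tw k \<sigma> t = u0 @ s2 @ v0"
      then obtain \<sigma> t where st: "inEsig k id t" "\<sigma> permutes Cset k" "tw k \<sigma> t = u0 @ s2 @ v0" by blast
      have e: "u0 = [] \<and> v0 = []" by (rule len_force[OF k st(1) st(3) u0 t2(3)])
      then have st3: "tw k \<sigma> t = s2" using st(3) by simp
      have ss: "(\<sigma> \<circ> transpose (cc k p) (cc k q)) permutes Cset k \<and>
         sign (\<sigma> \<circ> transpose (cc k p) (cc k q)) = - sign \<sigma>" by (rule sign_swap_comp[OF k pq st(2)])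
      have "tw k (\<sigma> \<circ> transpose (cc k p) (cc k q)) t = u0 @ s1 @ v0" using sw21[OF st(1) st(2) st3] e by simp
      then show False using False st(1) conjunct1[OF ss] by blast
    qed
    show ?thesis unfolding ps using psi_mono_none[OF False, of \<kappa>] psi_mono_none[OF False2, of \<kappa>] by simp
  qed
qed

lemma Bsum_add: "f \<in> Bsum j \<Longrightarrow> g \<in> Bsum j \<Longrightarrow> (\<lambda>w. f w + g w) \<in> Bsum j"
  unfolding Bsum_def by (rule kspan.add)
lemma Bsum_smul: "f \<in> Bsum j \<Longrightarrow> (\<lambda>w. c * f w) \<in> Bsum j"
  unfolding Bsum_def by (rule kspan.smul)

lemma core_all:
  assumes k: "k \<ge> 1" and j: "1 \<le> j" "j \<le> k" and u0: "length u0 = m * 100^(j\<^sup>2)" and z: "z \<in> Z j"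
  shows "psi k (fa_mult (fa_mult (mono u0) z) (mono v0)) \<in> (Bsum (k - 1) :: 'a::field fa set)"
proof (cases "j < k")
  case True
  have "psi k (fa_mult (fa_mult (mono u0) z) (mono v0)) \<in> (B j :: 'a fa set)"
    by (rule core_lt[OF k j(1) True u0 z])
  then show ?thesis unfolding Bsum_def using j True by (intro kspan.gen) auto
next
  case False
  then have "j = k" using j by simp
  then show ?thesis using core_eq[of k u0 m z v0] k u0 z Bsum_zero by simp
qed

lemma liftv:
  assumes k: "k \<ge> 1" and j: "1 \<le> j" "j \<le> k" and u0: "length u0 = m * 100^(j\<^sup>2)" and z: "z \<in> Z j"
    and v: "v \<in> Aone"
  shows "psi k (fa_mult (fa_mult (mono u0) z) v) \<in> (Bsum (k - 1) :: 'a::field fa set)"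
  using v unfolding Aone_def
proof (induction rule: kspan.induct)
  case zero
  then show ?case by (simp add: fa_mult_zero2 psi_zero Bsum_zero)
next
  case (gen f)
  then obtain v0 where "f = mono v0" by auto
  then show ?case using core_all[OF k j u0 z] by simp
next
  case (add f g)
  then show ?case by (simp add: fa_mult_add2 psi_add Bsum_add)
next
  case (smul f c)
  then show ?case by (simp add: fa_mult_smul2 psi_smul Bsum_smul)
qed

lemma liftu:
  assumes k: "k \<ge> 1" and j: "1 \<le> j" "j \<le> k" and u: "u \<in> Adeg (m * 100^(j\<^sup>2))" and z: "z \<in> Z j"
    and v: "v \<in> Aone"
  shows "psi k (fa_mult (fa_mult u z) v) \<in> (Bsum (k - 1) :: 'a::field fa set)"
  using u unfolding Adeg_def
proof (induction rule: kspan.induct)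
  case zero
  then show ?case by (simp add: fa_mult_zero1 psi_zero Bsum_zero)
next
  case (gen f)
  then obtain u0 where "f = mono u0" "length u0 = m * 100^(j\<^sup>2)" by auto
  then show ?case using liftv[OF k j _ z v] by simp
next
  case (add f g)
  then show ?case by (simp add: fa_mult_add1 psi_add Bsum_add)
next
  case (smul f c)
  then show ?case by (simp add: fa_mult_smul1 psi_smul Bsum_smul)
qed

lemma liftB:
  assumes k: "k \<ge> 1" and j: "1 \<le> j" "j \<le> k" and f: "f \<in> B j"
  shows "psi k f \<in> (Bsum (k - 1) :: 'a::field fa set)"
  using f unfolding B_def
proof (induction rule: kspan.induct)
  case zero
  then show ?case by (simp add: psi_zero Bsum_zero)
next
  case (gen f)
  then show ?case using liftu[OF k j] by blast
next
  case (add f g)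
  then show ?case by (simp add: psi_add Bsum_add)
next
  case (smul f c)
  then show ?case by (simp add: psi_smul Bsum_smul)
qed

lemma liftBsum:
  assumes k: "k \<ge> 1" and f: "f \<in> Bsum k"
  shows "psi k f \<in> (Bsum (k - 1) :: 'a::field fa set)"
  using f unfolding Bsum_def[of k]
proof (induction rule: kspan.induct)
  case zero
  then show ?case by (simp add: psi_zero Bsum_zero)
next
  case (gen f)
  then show ?case using liftB[OF k] by auto
next
  case (add f g)
  then show ?case using Bsum_add by (simp add: psi_add)
next
  case (smul f c)
  then show ?case using Bsum_smul by (simp add: psi_smul)
qed

theorem mainTheorem7:
  fixes k :: nat and a :: "'a::field fa"
  assumes "k \<ge> 1"
    and "a \<in> Adeg (100 ^ (k\<^sup>2) - 1)"
    and "a \<in> Bsum k"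
    and "\<forall>\<sigma>. \<sigma> permutes (cc k ` {0..k}) \<and> \<sigma> \<noteq> id \<longrightarrow>
           (\<forall>s. a s \<noteq> 0 \<longrightarrow> \<not> inEsig k \<sigma> s)"
  shows "(\<lambda>s. if inEsig k id s then a s else 0) \<in> Bsum (k - 1)"
proof -
  have "psi k a = (\<lambda>s. if inEsig k id s then a s else 0)"
  proof
    fix t
    show "psi k a t = (if inEsig k id t then a t else 0)"
    proof (cases "inEsig k id t")
      case True
      have "(\<Sum>\<sigma>\<in>{\<sigma>. \<sigma> permutes Cset k}. of_int (sign \<sigma>) * a (tw k \<sigma> t)) = of_int (sign (id::nat\<Rightarrow>nat)) * a (tw k id t)"
      proof (rule sum_single)
        show "finite {\<sigma>. \<sigma> permutes Cset k}" by simp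
        show "id \<in> {\<sigma>. \<sigma> permutes Cset k}" by (simp add: permutes_id)
        fix \<sigma> assume s: "\<sigma> \<in> {\<sigma>. \<sigma> permutes Cset k}" "\<sigma> \<noteq> id"
        have "inEsig k \<sigma> (tw k \<sigma> t)" by (rule tw_inE[OF True assms(1)])
        then have "a (tw k \<sigma> t) = 0" using assms(4) s unfolding Cset_def by blast
        then show "of_int (sign \<sigma>) * a (tw k \<sigma> t) = 0" by simp
      qed
      then show ?thesis using True by (simp add: psi_def tw_id)
    next
      case False
      then show ?thesis by (simp add: psi_def)
    qed
  qed
  moreover have "psi k a \<in> Bsum (k - 1)" by (rule liftBsum[OF assms(1) assms(3)])
  ultimately show ?thesis by simp
qed

end
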